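(* Let $k\ge 1$ be the cache size. In both the discard-predictions setup and the phase-predictions setup, there is no deterministic online paging algorithm that is $(\alpha,\beta,\gamma)$-competitive with either $\alpha+\beta<k$ or $\alpha+(k-1)\gamma<k$.
   Context: Paging: there is a universe $U$ of pages and a cache holding at most $k$ pages, initially empty. Requests $r_1,\dots,r_n\in U$ arrive online. If the requested page is not in the cache (a page fault), it must be loaded, evicting a cached page if the cache holds $k$ pages. The cost is the number of page faults; $\mathrm{OPT}(I)$ is the minimum offline cost on request sequence $I$. Along with each request $r_i$ the online algorithm receives a prediction bit $p_i\in\{0,1\}$ (which may be arbitrary). An algorithm is $(\alpha,\beta,\gamma)$-competitive (with $\alpha,\beta,\gamma\ge0$) if there is a constant $b$ (possibly depending on $k$) such that for every instance $I$ and all predictions $p$, $\mathrm{ALG}(I,p)\le \alpha\,\mathrm{OPT}(I)+\beta\,\eta_0+\gamma\,\eta_1+b$. Discard-predictions setup: fix the optimal offline algorithm LFD (on a fault with full cache, evict a cached page never requested again if one exists, otherwise the cached page whose next request is furthest in the future; ties broken by a fixed rule). Ground truth: $p_i^*=0$ if LFD keeps $r_i$ in cache until its next request (or to the end if none), $p_i^*=1$ if LFD evicts $r_i$ before it is requested again. Errors: $\eta_h=|\{i\in[n]: p_i=h,\ p_i^*=1-h\}|$. Phase-predictions setup: partition the requests into $k$-phases (the first starts at $r_1$; each phase is a maximal contiguous segment with at most $k$ distinct pages; the next starts right after). For $r_i$ in phase $j$: $p_i^*=0$ if page $r_i$ is requested in phase $j+1$, else $p_i^*=1$. Errors: $\eta_h$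 = number of counted requests $i$ with $p_i=h$, $p_i^*=1-h$, where counted requests are, for each non-last phase $j$ and each page requested in phase $j$, only the last request to that page within phase $j$. *)

theory Defs
  imports Main "HOL.Real"
begin

(* A prediction bit is a bool: True = 1, False = 0.
   A (deterministic) eviction chooser receives the history of all
   (request, prediction) pairs seen so far (including the current one)
   and the current cache, and names the page to evict. *)
type_synonym chooser = "(nat \<times> bool) list \<Rightarrow> nat set \<Rightarrow> nat"

definition evict_page :: "chooser \<Rightarrow> (nat \<times> bool) list \<Rightarrow> nat set \<Rightarrow> nat" where
  "evict_page A h C = (let y = A h C in if y \<in> C then y else Min C)"

(* serve request r (history h already includes the current pair) *)
definition step :: "nat \<Rightarrow> chooser \<Rightarrow> (nat \<times> bool) list \<Rightarrow> nat set \<Rightarrow> nat \<Rightarrow> nat set" where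
  "step k A h C r =
     (if r \<in> C then C
      else if card C < k then insert r C
      else insert r (C - {evict_page A h C}))"

fun trace :: "nat \<Rightarrow> chooser \<Rightarrow> (nat \<times> bool) list \<Rightarrow> nat set \<Rightarrow> (nat \<times> bool) list \<Rightarrow> nat set list" where
  "trace k A h C [] = []"
| "trace k A h C (x # xs) =
     (let C' = step k A (h @ [x]) C (fst x) in C' # trace k A (h @ [x]) C' xs)"

fun cost :: "nat \<Rightarrow> chooser \<Rightarrow> (nat \<times> bool) list \<Rightarrow> nat set \<Rightarrow> (nat \<times> bool) list \<Rightarrow> nat" where
  "cost k A h C [] = 0"
| "cost k A h C (x # xs) =
     (if fst x \<in> C then 0 else 1) + cost k A (h @ [x]) (step k A (h @ [x]) C (fst x)) xs"

definition inp :: "nat list \<Rightarrow> (nat \<Rightarrow> bool) \<Rightarrow> (nat \<times> bool) list" where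
  "inp I p = map (\<lambda>i. (I ! i, p i)) [0..<length I]"

definition ALG :: "nat \<Rightarrow> chooser \<Rightarrow> nat list \<Rightarrow> (nat \<Rightarrow> bool) \<Rightarrow> nat" where
  "ALG k A I p = cost k A [] {} (inp I p)"

(* Offline optimum: I is fixed, so any function of the history (whose length
   is the current index) is an arbitrary offline demand-paging strategy. *)
definition OPT :: "nat \<Rightarrow> nat list \<Rightarrow> nat" where
  "OPT k I = (LEAST c. \<exists>A. c = cost k A [] {} (inp I (\<lambda>_. False)))"

definition next_req :: "nat list \<Rightarrow> nat \<Rightarrow> nat \<Rightarrow> nat" where
  "next_req I i x = (LEAST j. i < j \<and> j < length I \<and> I ! j = x)"

definition lfd_choose :: "(nat \<Rightarrow> nat set \<Rightarrow> nat) \<Rightarrow> nat list \<Rightarrow> chooser" where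
  "lfd_choose tb I h C =
     (let i = length h - 1;
          later = {x \<in> C. \<forall>j. i < j \<and> j < length I \<longrightarrow> I ! j \<noteq> x}
      in if later \<noteq> {} then tb i later
         else arg_max (next_req I i) (\<lambda>x. x \<in> C))"

definition lfd_trace :: "nat \<Rightarrow> (nat \<Rightarrow> nat set \<Rightarrow> nat) \<Rightarrow> nat list \<Rightarrow> nat set list" where
  "lfd_trace k tb I = trace k (lfd_choose tb I) [] {} (inp I (\<lambda>_. False))"

(* True = 1: LFD evicts r_i before r_i is requested again (or before the end) *)
definition pstar_disc :: "nat \<Rightarrow> (nat \<Rightarrow> nat set \<Rightarrow> nat) \<Rightarrow> nat list \<Rightarrow> nat \<Rightarrow> bool" where
  "pstar_disc k tb I i =
     (\<exists>j. i \<le> j \<and> j < length I \<and> (\<forall>l. i < l \<and> l \<le> j \<longrightarrow> I ! l \<noteq> I ! i)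
          \<and> I ! i \<notin> lfd_trace k tb I ! j)"

definition eta_disc :: "nat \<Rightarrow> (nat \<Rightarrow> nat set \<Rightarrow> nat) \<Rightarrow> bool \<Rightarrow> nat list \<Rightarrow> (nat \<Rightarrow> bool) \<Rightarrow> nat" where
  "eta_disc k tb h I p = card {i. i < length I \<and> p i = h \<and> pstar_disc k tb I i = (\<not> h)}"

fun phase_ids :: "nat \<Rightarrow> nat \<Rightarrow> nat set \<Rightarrow> nat list \<Rightarrow> nat list" where
  "phase_ids k j S [] = []"
| "phase_ids k j S (r # rs) =
     (if card (insert r S) \<le> k then j # phase_ids k j (insert r S) rs
      else (j + 1) # phase_ids k (j + 1) {r} rs)"

definition phase :: "nat \<Rightarrow> nat list \<Rightarrow> nat \<Rightarrow> nat" where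
  "phase k I i = phase_ids k 0 {} I ! i"

definition pstar_phase :: "nat \<Rightarrow> nat list \<Rightarrow> nat \<Rightarrow> bool" where
  "pstar_phase k I i = (\<not> (\<exists>l < length I. phase k I l = phase k I i + 1 \<and> I ! l = I ! i))"

definition counted :: "nat \<Rightarrow> nat list \<Rightarrow> nat \<Rightarrow> bool" where
  "counted k I i =
     (i < length I \<and> phase k I i \<noteq> phase k I (length I - 1)
      \<and> (\<forall>l. i < l \<and> l < length I \<and> phase k I l = phase k I i \<longrightarrow> I ! l \<noteq> I ! i))"

definition eta_phase :: "nat \<Rightarrow> bool \<Rightarrow> nat list \<Rightarrow> (nat \<Rightarrow> bool) \<Rightarrow> nat" where
  "eta_phase k h I p = card {i. counted k I i \<and> p i = h \<and> pstar_phase k I i = (\<not> h)}"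

(* eta False = eta_0, eta True = eta_1 *)
definition competitive ::
  "nat \<Rightarrow> chooser \<Rightarrow> (bool \<Rightarrow> nat list \<Rightarrow> (nat \<Rightarrow> bool) \<Rightarrow> nat) \<Rightarrow> real \<Rightarrow> real \<Rightarrow> real \<Rightarrow> bool" where
  "competitive k A eta \<alpha> \<beta> \<gamma> =
     (\<exists>b::real. \<forall>I p. real (ALG k A I p)
        \<le> \<alpha> * real (OPT k I) + \<beta> * real (eta False I p) + \<gamma> * real (eta True I p) + b)"

definition valid_tiebreak :: "(nat \<Rightarrow> nat set \<Rightarrow> nat) \<Rightarrow> bool" where
  "valid_tiebreak tb = (\<forall>i S. finite S \<and> S \<noteq> {} \<longrightarrow> tb i S \<in> S)"

end

theory Submission
  imports Defs
begin


fun csg :: "nat \<Rightarrow> chooser \<Rightarrow> (nat \<times> bool) list \<Rightarrow> nat set \<Rightarrow> (nat \<times> bool) list \<Rightarrow> nat \<Rightarrow> nat set" where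
  "csg k B h C xs 0 = C"
| "csg k B h C xs (Suc j) = step k B (h @ take (Suc j) xs) (csg k B h C xs j) (fst (xs ! j))"

lemma csg_Cons:
  "csg k B h C (x # xs) (Suc j) = csg k B (h @ [x]) (step k B (h @ [x]) C (fst x)) xs j"
  by (induction j) auto

lemma trace_nth:
  "j < length xs \<Longrightarrow> trace k B h C xs ! j = csg k B h C xs (Suc j)"
proof (induction xs arbitrary: h C j)
  case Nil
  then show ?case by simp
next
  case (Cons x xs)
  show ?case
  proof (cases j)
    case 0
    then show ?thesis by (simp add: Let_def)
  next
    case (Suc j')
    then show ?thesis using Cons by (simp add: Let_def csg_Cons del: csg.simps)
  qed
qed

lemma cost_sum:
  fixes xs :: "(nat \<times> bool) list"
  shows "cost k B h C xs = (\<Sum>j<length xs. if fst (xs ! j) \<in> csg k B h C xs j then 0 else 1)"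
proof (induction xs arbitrary: h C rule: list.induct)
  case Nil
  then show ?case by simp
next
  case (Cons x xs)
  show ?case
    by (simp only: cost.simps Cons.IH length_Cons sum.lessThan_Suc_shift csg_Cons nth_Cons_Suc)
       simp
qed

lemma sum_ind_card:
  "(\<Sum>j<(n::nat). if P j then 0 else (1::nat)) = card {j. j < n \<and> \<not> P j}"
proof (induction n)
  case 0
  then show ?case by simp
next
  case (Suc n)
  have "{j. j < Suc n \<and> \<not> P j} = {j. j < n \<and> \<not> P j} \<union> (if P n then {} else {n})"
    by (auto simp: less_Suc_eq)
  then show ?case using Suc by (auto simp: card_insert_if)
qed

lemma cost_card:
  "cost k B h C xs = card {j. j < length xs \<and> fst (xs ! j) \<notin> csg k B h C xs j}"
  unfolding cost_sum sum_ind_card ..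

lemma step_props:
  assumes "k \<ge> 1" "finite C" "card C \<le> k"
  shows "finite (step k B h C r) \<and> card (step k B h C r) \<le> k \<and> r \<in> step k B h C r
     \<and> step k B h C r \<subseteq> insert r C \<and> card C \<le> card (step k B h C r)"
proof (cases "r \<in> C")
  case True
  then show ?thesis using assms by (auto simp add: step_def)
next
  case F: False
  show ?thesis
  proof (cases "card C < k")
    case True
    then show ?thesis using assms F by (simp add: step_def)
  next
    case False
    then have ck: "card C = k" using assms by simp
    then have "C \<noteq> {}" using assms by auto
    then have e: "evict_page B h C \<in> C" using assms(2) by (simp add: evict_page_def Let_def)
    have "card (insert r (C - {evict_page B h C})) = k"
      using e F ck assms(2) by (simp add: card_insert_if)
         (metis One_nat_def Suc_pred assms(1) card_gt_0_iff le_less_trans less_numeral_extra(1) \<open>C \<noteq> {}\<close>)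
    then show ?thesis using assms F False e ck by (auto simp add: step_def)
  qed
qed

lemma csg_props:
  assumes "k \<ge> 1"
  shows "finite (csg k B [] {} xs j) \<and> card (csg k B [] {} xs j) \<le> k
        \<and> csg k B [] {} xs j \<subseteq> {fst (xs ! m) | m. m < j}"
proof (induction j)
  case 0
  then show ?case by simp
next
  case (Suc j)
  then show ?case using step_props[OF assms, of "csg k B [] {} xs j" B "take (Suc j) xs" "fst (xs ! j)"]
    by (auto simp: less_Suc_eq)
qed



lemma csg_suc_sub: "k \<ge> 1 \<Longrightarrow> csg k B [] {} xs (Suc j) \<subseteq> insert (fst (xs ! j)) (csg k B [] {} xs j)"
  using step_props[of k "csg k B [] {} xs j" B "take (Suc j) xs" "fst (xs ! j)"] csg_props[of k B xs j]
  by simp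

lemma csg_suc_in: "k \<ge> 1 \<Longrightarrow> fst (xs ! j) \<in> csg k B [] {} xs (Suc j)"
  using step_props[of k "csg k B [] {} xs j" B "take (Suc j) xs" "fst (xs ! j)"] csg_props[of k B xs j]
  by simp

lemma csg_suc_card: "k \<ge> 1 \<Longrightarrow> card (csg k B [] {} xs j) \<le> card (csg k B [] {} xs (Suc j))"
  using step_props[of k "csg k B [] {} xs j" B "take (Suc j) xs" "fst (xs ! j)"] csg_props[of k B xs j]
  by simp

lemma csg_hit: "fst (xs ! j) \<in> csg k B [] {} xs j \<Longrightarrow> csg k B [] {} xs (Suc j) = csg k B [] {} xs j"
  by (simp add: step_def)

lemma csg_nonfull: "fst (xs ! j) \<notin> csg k B [] {} xs j \<Longrightarrow> card (csg k B [] {} xs j) < k \<Longrightarrow>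
   csg k B [] {} xs (Suc j) = insert (fst (xs ! j)) (csg k B [] {} xs j)"
  by (simp add: step_def)

lemma csg_full: "k \<ge> 1 \<Longrightarrow> fst (xs ! j) \<notin> csg k B [] {} xs j \<Longrightarrow> \<not> card (csg k B [] {} xs j) < k \<Longrightarrow>
   csg k B [] {} xs (Suc j) = insert (fst (xs ! j)) (csg k B [] {} xs j - {evict_page B (take (Suc j) xs) (csg k B [] {} xs j)})
   \<and> evict_page B (take (Suc j) xs) (csg k B [] {} xs j) \<in> csg k B [] {} xs j
   \<and> card (csg k B [] {} xs j) = k"
proof -
  assume a: "k \<ge> 1" "fst (xs ! j) \<notin> csg k B [] {} xs j" "\<not> card (csg k B [] {} xs j) < k"
  have f: "finite (csg k B [] {} xs j)" "card (csg k B [] {} xs j) \<le> k" using csg_props[OF a(1)] by auto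
  then have ck: "card (csg k B [] {} xs j) = k" using a by simp
  then have "csg k B [] {} xs j \<noteq> {}" using a(1) by auto
  then have "evict_page B (take (Suc j) xs) (csg k B [] {} xs j) \<in> csg k B [] {} xs j"
    using f by (simp add: evict_page_def Let_def)
  then show ?thesis using a ck by (simp add: step_def)
qed

lemma csg_card_mono: "k \<ge> 1 \<Longrightarrow> a \<le> b \<Longrightarrow> card (csg k B [] {} xs a) \<le> card (csg k B [] {} xs b)"
proof (induction b)
  case 0
  then show ?case by simp
next
  case (Suc b)
  then show ?case using csg_suc_card[of k B xs b] by (cases "a = Suc b") auto
qed

lemma csg_enter: "k \<ge> 1 \<Longrightarrow> x \<notin> csg k B [] {} xs a \<Longrightarrow> x \<in> csg k B [] {} xs b \<Longrightarrow> a \<le> b \<Longrightarrow>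
   \<exists>m. a \<le> m \<and> m < b \<and> fst (xs ! m) = x"
proof (induction b)
  case 0
  then show ?case by simp
next
  case (Suc b)
  show ?case
  proof (cases "a = Suc b")
    case True
    then show ?thesis using Suc by simp
  next
    case False
    then have ab: "a \<le> b" using Suc by simp
    show ?thesis
    proof (cases "x \<in> csg k B [] {} xs b")
      case True
      then show ?thesis using Suc ab by (meson less_Suc_eq)
    next
      case False
      then have "x = fst (xs ! b)" using Suc csg_suc_sub[of k B xs b] by auto
      then show ?thesis using ab by auto
    qed
  qed
qed

lemma csg_prefix: "j \<le> length xs \<Longrightarrow> csg k B h C (xs @ ys) j = csg k B h C xs j"
proof (induction j)
  case 0
  then show ?case by simp
next
  case (Suc j)
  then have "take (Suc j) (xs @ ys) = take (Suc j) xs" "(xs @ ys) ! j = xs ! j" by (auto simp: nth_append)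
  then show ?case using Suc by (simp del: take_Suc)
qed

lemma inp_const: "inp I (\<lambda>_. c) = map (\<lambda>r. (r, c)) I"
proof -
  have "inp I (\<lambda>_. c) = map (\<lambda>r. (r, c)) (map (\<lambda>i. I ! i) [0..<length I])"
    unfolding inp_def by simp
  then show ?thesis by (simp only: map_nth)
qed

lemma inp_nth: "i < length I \<Longrightarrow> inp I p ! i = (I ! i, p i)"
  by (simp add: inp_def)

lemma length_inp[simp]: "length (inp I p) = length I"
  by (simp add: inp_def)

fun advl :: "nat \<Rightarrow> chooser \<Rightarrow> bool \<Rightarrow> nat \<Rightarrow> nat list" where
  "advl k A c 0 = []"
| "advl k A c (Suc n) = advl k A c n @ [Min ({0..k} - csg k A [] {} (map (\<lambda>r. (r, c)) (advl k A c n)) n)]"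

lemma length_advl[simp]: "length (advl k A c n) = n"
  by (induction n) auto

lemma advl_nth: "j < n \<Longrightarrow> advl k A c n ! j = Min ({0..k} - csg k A [] {} (map (\<lambda>r. (r, c)) (advl k A c n)) j)"
proof (induction n)
  case 0
  then show ?case by simp
next
  case (Suc n)
  have pre: "csg k A [] {} (map (\<lambda>r. (r, c)) (advl k A c (Suc n))) j = csg k A [] {} (map (\<lambda>r. (r, c)) (advl k A c n)) j"
    using Suc.prems csg_prefix[of j "map (\<lambda>r. (r, c)) (advl k A c n)"] by simp
  show ?case
  proof (cases "j < n")
    case True
    then show ?thesis using Suc pre by (simp add: nth_append)
  next
    case False
    then have "j = n" using Suc by simp
    then show ?thesis using pre by (simp add: nth_append)
  qed
qed

lemma missing_nonempty:
  assumes "k \<ge> 1" shows "{0..k} - csg k B [] {} xs j \<noteq> {}"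
proof
  assume "{0..k} - csg k B [] {} xs j = {}"
  then have "{0..k} \<subseteq> csg k B [] {} xs j" by auto
  then have "card {0..k} \<le> card (csg k B [] {} xs j)" using csg_props[OF assms] card_mono by metis
  then show False using csg_props[OF assms, of B xs j] by simp
qed

lemma advl_in: "k \<ge> 1 \<Longrightarrow> j < n \<Longrightarrow> advl k A c n ! j \<in> {0..k} - csg k A [] {} (map (\<lambda>r. (r, c)) (advl k A c n)) j"
  using advl_nth[of j n k A c] missing_nonempty[of k A "map (\<lambda>r. (r, c)) (advl k A c n)" j]
  by (metis Min_in finite_Diff finite_atLeastAtMost)

lemma ALG_advl: "k \<ge> 1 \<Longrightarrow> ALG k A (advl k A c n) (\<lambda>_. c) = n"
proof -
  assume k: "k \<ge> 1"
  have "{j. j < n \<and> fst (map (\<lambda>r. (r, c)) (advl k A c n) ! j) \<notin> csg k A [] {} (map (\<lambda>r. (r, c)) (advl k A c n)) j} = {..<n}"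
    using advl_in[OF k] by auto
  then show ?thesis unfolding ALG_def inp_const cost_card by simp
qed

lemma cost_fresh: "k \<ge> 1 \<Longrightarrow> cost k B [] {} (inp [0..<n] p) = n"
proof -
  assume k: "k \<ge> 1"
  have "{j. j < n \<and> fst (inp [0..<n] p ! j) \<notin> csg k B [] {} (inp [0..<n] p) j} = {..<n}"
  proof -
    have "fst (inp [0..<n] p ! j) \<notin> csg k B [] {} (inp [0..<n] p) j" if "j < n" for j
    proof
      assume "fst (inp [0..<n] p ! j) \<in> csg k B [] {} (inp [0..<n] p) j"
      then obtain m where "m < j" "fst (inp [0..<n] p ! j) = fst (inp [0..<n] p ! m)"
        using csg_props[OF k, of B "inp [0..<n] p" j] by auto
      then show False using that by (simp add: inp_nth)
    qed
    then show ?thesis by auto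
  qed
  then show ?thesis unfolding cost_card by simp
qed

lemma OPT_fresh: "k \<ge> 1 \<Longrightarrow> OPT k [0..<n] = n"
proof -
  assume k: "k \<ge> 1"
  have "(\<exists>A. c = cost k A [] {} (inp [0..<n] (\<lambda>_. False))) = (c = n)" for c
    using cost_fresh[OF k, of _ n "\<lambda>_. False"] by auto
  then show ?thesis unfolding OPT_def by (simp add: Least_equality)
qed

lemma ALG_fresh: "k \<ge> 1 \<Longrightarrow> ALG k A [0..<n] p = n"
  unfolding ALG_def using cost_fresh by simp

lemma OPT_le: "OPT k I \<le> cost k B [] {} (inp I (\<lambda>_. False))"
  unfolding OPT_def by (rule Least_le) blast



lemma gap_card:
  fixes S :: "nat set"
  assumes "k \<ge> 1" "S \<subseteq> {..<n}" "\<forall>a\<in>S. \<forall>b\<in>S. a < b \<longrightarrow> a + k \<le> b"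
  shows "k * card S \<le> n + k - 1"
  using assms
proof (induction n arbitrary: S rule: less_induct)
  case (less n)
  show ?case
  proof (cases "n = 0")
    case True
    then show ?thesis using less by simp
  next
    case False
    then obtain m where m: "n = Suc m" using not0_implies_Suc by blast
    show ?thesis
    proof (cases "m \<in> S")
      case False
      then have "S \<subseteq> {..<m}" using less m by (auto simp: less_Suc_eq)
      then have "k * card S \<le> m + k - 1" using less m by simp
      then show ?thesis using m by simp
    next
      case True
      have fin: "finite S" using less finite_subset by blast
      show ?thesis
      proof (cases "m + 1 \<ge> k")
        case True2: True
        have sub: "S - {m} \<subseteq> {..<m + 1 - k}"
        proof
          fix a assume "a \<in> S - {m}"
          then have "a < m" "a + k \<le> m" using less m True by auto
          then show "a \<in> {..<m + 1 - k}" by auto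
        qed
        have "m + 1 - k < n" using m less(2) by simp
        then have "k * card (S - {m}) \<le> m + 1 - k + k - 1"
          using less(1)[of "m + 1 - k" "S - {m}"] sub less(2,4) by blast
        moreover have "card S = card (S - {m}) + 1" using True fin
          by (metis Suc_eq_plus1 card_Suc_Diff1)
        ultimately show ?thesis using m True2 by (simp add: algebra_simps)
      next
        case False
        have "S - {m} = {}"
        proof (rule ccontr)
          assume "S - {m} \<noteq> {}"
          then obtain a where "a \<in> S" "a \<noteq> m" by auto
          then have "a < m" using less m by auto
          then show False using less \<open>a \<in> S\<close> True False by force
        qed
        then have "S = {m}" using True by auto
        then show ?thesis using m by simp
      qed
    qed
  qed
qed

locale lfdc =
  fixes k :: nat and tb :: "nat \<Rightarrow> nat set \<Rightarrow> nat" and I :: "nat list"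
  assumes k1: "k \<ge> 1" and vtb: "valid_tiebreak tb" and rng: "\<And>j. j < length I \<Longrightarrow> I ! j \<le> k"
begin

abbreviation "n \<equiv> length I"
abbreviation "xs \<equiv> inp I (\<lambda>_. False)"
abbreviation "LB \<equiv> lfd_choose tb I"
definition "D j = csg k LB [] {} xs j"

lemma fst_xs[simp]: "j < n \<Longrightarrow> fst (xs ! j) = I ! j"
  by (simp add: inp_nth)

lemma D_props: "finite (D j) \<and> card (D j) \<le> k"
  using csg_props[OF k1] by (simp add: D_def)

lemma D_sub: "j \<le> n \<Longrightarrow> D j \<subseteq> {I ! m | m. m < j}"
  using csg_props[OF k1, of LB xs j] by (force simp: D_def)

lemma D_range: "j \<le> n \<Longrightarrow> D j \<subseteq> {0..k}"
  using D_sub rng by force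

lemma lfd_in:
  assumes "j < n" "finite C" "C \<noteq> {}" "length h = Suc j"
  shows "LB h C \<in> C \<and> ((\<exists>x\<in>C. \<forall>j'. j < j' \<and> j' < n \<longrightarrow> I ! j' \<noteq> x) \<longrightarrow> (\<forall>j'. j < j' \<and> j' < n \<longrightarrow> I ! j' \<noteq> LB h C))
     \<and> (\<not>(\<exists>x\<in>C. \<forall>j'. j < j' \<and> j' < n \<longrightarrow> I ! j' \<noteq> x) \<longrightarrow> (\<forall>y\<in>C. next_req I j y \<le> next_req I j (LB h C)))"
proof -
  define later where "later = {x \<in> C. \<forall>j'. j < j' \<and> j' < n \<longrightarrow> I ! j' \<noteq> x}"
  show ?thesis
  proof (cases "later = {}")
    case False
    have "finite later" using assms(2) by (simp add: later_def)
    then have "tb j later \<in> later" using vtb False by (simp add: valid_tiebreak_def)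
    moreover have "LB h C = tb j later" using False assms(4) by (simp add: lfd_choose_def later_def Let_def)
    ultimately show ?thesis using False by (auto simp: later_def)
  next
    case True
    have ex: "\<forall>y\<in>C. \<exists>j'. j < j' \<and> j' < n \<and> I ! j' = y" using True by (auto simp: later_def)
    have bnd: "\<forall>y. y \<in> C \<longrightarrow> next_req I j y < n"
    proof (intro allI impI)
      fix y assume "y \<in> C"
      then obtain j' where "j < j' \<and> j' < n \<and> I ! j' = y" using ex by blast
      then show "next_req I j y < n" unfolding next_req_def by (metis (mono_tags, lifting) LeastI)
    qed
    obtain x0 where "x0 \<in> C" using assms(3) by auto
    then have am: "arg_max (next_req I j) (\<lambda>x. x \<in> C) \<in> C \<and> (\<forall>y. y \<in> C \<longrightarrow> next_req I j y \<le> next_req I j (arg_max (next_req I j) (\<lambda>x. x \<in> C)))"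
      using arg_max_nat_lemma[of "\<lambda>x. x \<in> C" x0 "next_req I j" n] bnd by blast
    have eq: "{x \<in> C. \<forall>j'. length h - 1 < j' \<and> j' < length I \<longrightarrow> I ! j' \<noteq> x} = later"
      by (simp add: later_def assms(4))
    have "LB h C = arg_max (next_req I j) (\<lambda>x. x \<in> C)"
      unfolding lfd_choose_def Let_def eq using True assms(4) by simp
    then show ?thesis using am True by (auto simp: later_def)
  qed
qed

definition "ev j = evict_page LB (take (Suc j) xs) (D j)"

lemma full_step:
  assumes "j < n" "I ! j \<notin> D j" "\<not> card (D j) < k"
  shows "D (Suc j) = insert (I ! j) (D j - {ev j}) \<and> ev j \<in> D j \<and> card (D j) = k
     \<and> ev j = LB (take (Suc j) xs) (D j)"
proof -
  have a: "D (Suc j) = insert (I ! j) (D j - {ev j}) \<and> ev j \<in> D j \<and> card (D j) = k"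
    using csg_full[OF k1, of xs j LB] assms by (simp add: D_def ev_def)
  then have "D j \<noteq> {}" using k1 by auto
  then have "LB (take (Suc j) xs) (D j) \<in> D j" using lfd_in[of j "D j" "take (Suc j) xs"] D_props assms by simp
  then show ?thesis using a by (simp add: ev_def evict_page_def Let_def)
qed

lemma hit_step: "j < n \<Longrightarrow> I ! j \<in> D j \<Longrightarrow> D (Suc j) = D j"
  using csg_hit[of xs j k LB] by (simp add: D_def)

lemma nonfull_step: "j < n \<Longrightarrow> I ! j \<notin> D j \<Longrightarrow> card (D j) < k \<Longrightarrow> D (Suc j) = insert (I ! j) (D j)"
  using csg_nonfull[of xs j k LB] by (simp add: D_def)

lemma in_suc: "j < n \<Longrightarrow> I ! j \<in> D (Suc j)"
  using csg_suc_in[OF k1, of xs j LB] by (simp add: D_def)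

lemma const_between:
  assumes "\<forall>m. a \<le> m \<and> m < b \<longrightarrow> I ! m \<in> D m" "a \<le> b" "b \<le> n"
  shows "D b = D a"
  using assms
proof (induction b)
  case 0
  then show ?case by simp
next
  case (Suc b)
  show ?case
  proof (cases "a = Suc b")
    case True
    then show ?thesis by simp
  next
    case False
    then have "a \<le> b" "I ! b \<in> D b" using Suc.prems by auto
    then show ?thesis using Suc hit_step[of b] by simp
  qed
qed

lemma key_gap:
  assumes t: "t < n" "I ! t \<notin> D t" "\<not> card (D t) < k"
    and t': "t < t'" "t' < n" "I ! t' \<notin> D t'"
  shows "t + k \<le> t'"
proof -
  define P where "P = (\<lambda>x. t < x \<and> x < n \<and> I ! x \<notin> D x)"
  define t0 where "t0 = (LEAST x. P x)"
  have "P t'" using t' by (simp add: P_def)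
  then have P0: "P t0" unfolding t0_def by (rule LeastI)
  have le: "t0 \<le> t'" unfolding t0_def using \<open>P t'\<close> by (rule Least_le)
  have hits: "\<forall>m. Suc t \<le> m \<and> m < t0 \<longrightarrow> I ! m \<in> D m"
  proof (intro allI impI)
    fix m assume m: "Suc t \<le> m \<and> m < t0"
    then have "\<not> P m" using not_less_Least[of m P] unfolding t0_def by blast
    moreover have "m < n" using m P0 unfolding P_def by simp
    ultimately show "I ! m \<in> D m" using m unfolding P_def by simp
  qed
  have Dt0: "D t0 = D (Suc t)" using const_between[OF hits] P0 by (simp add: P_def)
  have fs: "D (Suc t) = insert (I ! t) (D t - {ev t})" "ev t \<in> D t" "card (D t) = k"
     "ev t = LB (take (Suc t) xs) (D t)"
    using full_step[OF t] by auto
  have Dt_eq: "D t = {0..k} - {I ! t}"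
  proof (rule card_subset_eq)
    show "finite ({0..k} - {I ! t})" by simp
    show "D t \<subseteq> {0..k} - {I ! t}" using D_range[of t] t by auto
    show "card (D t) = card ({0..k} - {I ! t})" using fs rng[of t] t by simp
  qed
  have It0: "I ! t0 = ev t"
    using P0 Dt0 fs(1) Dt_eq rng[of t0] unfolding P_def by auto
  have ne: "D t \<noteq> {}" using fs k1 by auto
  have lt: "length (take (Suc t) xs) = Suc t" using t by simp
  note L = lfd_in[OF t(1) conjunct1[OF D_props] ne lt]
  have nl: "\<not>(\<exists>x\<in>D t. \<forall>j'. t < j' \<and> j' < n \<longrightarrow> I ! j' \<noteq> x)"
  proof
    assume "\<exists>x\<in>D t. \<forall>j'. t < j' \<and> j' < n \<longrightarrow> I ! j' \<noteq> x"
    then have "\<forall>j'. t < j' \<and> j' < n \<longrightarrow> I ! j' \<noteq> ev t" using L fs by auto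
    then show False using It0 P0 by (auto simp: P_def)
  qed
  then have mx: "\<forall>y\<in>D t. next_req I t y \<le> next_req I t (ev t)" using L fs by auto
  have nre: "next_req I t (ev t) \<le> t0"
    unfolding next_req_def using P0 It0 by (auto simp: P_def intro!: Least_le)
  have "next_req I t ` (D t - {ev t}) \<subseteq> {t<..<t0}"
  proof
    fix z assume "z \<in> next_req I t ` (D t - {ev t})"
    then obtain y where y: "y \<in> D t" "y \<noteq> ev t" "z = next_req I t y" by auto
    obtain j' where "t < j' \<and> j' < n \<and> I ! j' = y" using nl y by blast
    then have z: "t < z \<and> z < n \<and> I ! z = y" unfolding y next_req_def by (metis (mono_tags, lifting) LeastI)
    then have "z \<le> t0" using mx y nre by fastforce
    moreover have "z \<noteq> t0" using z It0 y by auto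
    ultimately show "z \<in> {t<..<t0}" using z by auto
  qed
  moreover have "inj_on (next_req I t) (D t - {ev t})"
  proof (rule inj_onI)
    fix y1 y2 assume y: "y1 \<in> D t - {ev t}" "y2 \<in> D t - {ev t}" "next_req I t y1 = next_req I t y2"
    have "\<And>y. y \<in> D t - {ev t} \<Longrightarrow> I ! next_req I t y = y"
    proof -
      fix y assume "y \<in> D t - {ev t}"
      then obtain j' where "t < j' \<and> j' < n \<and> I ! j' = y" using nl by blast
      then show "I ! next_req I t y = y" unfolding next_req_def by (metis (mono_tags, lifting) LeastI)
    qed
    then show "y1 = y2" using y by metis
  qed
  ultimately have "card (D t - {ev t}) \<le> card {t<..<t0}"
    by (metis card_image card_mono finite_greaterThanLessThan)
  then have "k - 1 \<le> t0 - Suc t" using fs D_props by simp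
  then show ?thesis using le k1 P0 unfolding P_def by linarith
qed

end



context lfdc
begin

definition "Ev = {j. j < n \<and> I ! j \<notin> D j \<and> \<not> card (D j) < k}"
definition "NE = {j. j < n \<and> I ! j \<notin> D j \<and> card (D j) < k}"
definition "E = {i. i < n \<and> pstar_disc k tb I i}"

lemma L_eq: "cost k LB [] {} xs = card (NE \<union> Ev)"
proof -
  have "{j. j < length xs \<and> fst (xs ! j) \<notin> csg k LB [] {} xs j} = NE \<union> Ev"
    by (auto simp: NE_def Ev_def D_def)
  then show ?thesis using cost_card[of k LB "[]" "{}" xs] by simp
qed

lemma D_card_mono: "a \<le> b \<Longrightarrow> card (D a) \<le> card (D b)"
  using csg_card_mono[OF k1] by (simp add: D_def)

lemma NE_card: "card NE \<le> k"
proof -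
  have "inj_on (\<lambda>j. card (D j)) NE"
  proof (rule inj_onI)
    fix a b assume ab: "a \<in> NE" "b \<in> NE" "card (D a) = card (D b)"
    have "card (D x) < card (D y)" if "x \<in> NE" "y \<in> NE" "x < y" for x y
    proof -
      have "D (Suc x) = insert (I ! x) (D x)" using that nonfull_step by (simp add: NE_def)
      then have "card (D (Suc x)) = Suc (card (D x))" using that D_props by (simp add: NE_def)
      moreover have "card (D (Suc x)) \<le> card (D y)" using D_card_mono that by simp
      ultimately show ?thesis by simp
    qed
    then show "a = b" using ab by (metis less_irrefl linorder_neqE_nat)
  qed
  moreover have "(\<lambda>j. card (D j)) ` NE \<subseteq> {..<k}" by (auto simp: NE_def)
  ultimately show ?thesis by (metis card_image card_lessThan card_mono finite_lessThan)
qed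

lemma Ev_card: "k * card Ev \<le> n + k - 1"
proof (rule gap_card[OF k1])
  show "Ev \<subseteq> {..<n}" by (auto simp: Ev_def)
  show "\<forall>a\<in>Ev. \<forall>b\<in>Ev. a < b \<longrightarrow> a + k \<le> b"
    using key_gap by (auto simp: Ev_def)
qed

lemma L_le: "cost k LB [] {} xs \<le> k + card Ev"
proof -
  have "card (NE \<union> Ev) \<le> card NE + card Ev" by (rule card_Un_le)
  then show ?thesis using L_eq NE_card by simp
qed

lemma L_ge: "card Ev \<le> cost k LB [] {} xs"
  unfolding L_eq by (rule card_mono) (auto simp: NE_def Ev_def)

lemma trace_D: "j < n \<Longrightarrow> lfd_trace k tb I ! j = D (Suc j)"
  unfolding lfd_trace_def D_def by (simp add: trace_nth)

lemma pstar_D: "pstar_disc k tb I i = (\<exists>j. i \<le> j \<and> j < n \<and> (\<forall>l. i < l \<and> l \<le> j \<longrightarrow> I ! l \<noteq> I ! i) \<and> I ! i \<notin> D (Suc j))"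
  unfolding pstar_disc_def using trace_D by auto

lemma E_le: "card E \<le> card Ev"
proof -
  define Q where "Q i j = (i \<le> j \<and> j < n \<and> (\<forall>l. i < l \<and> l \<le> j \<longrightarrow> I ! l \<noteq> I ! i) \<and> I ! i \<notin> D (Suc j))" for i j
  define phi where "phi i = (LEAST j. Q i j)" for i
  have main: "phi i \<in> Ev \<and> ev (phi i) = I ! i \<and> Q i (phi i)" if "i \<in> E" for i
  proof -
    have "\<exists>j. Q i j" using that by (simp add: E_def pstar_D Q_def)
    then have Qj: "Q i (phi i)" unfolding phi_def by (metis LeastI)
    define j where "j = phi i"
    have in_i: "I ! i \<in> D (Suc i)" using in_suc that by (simp add: E_def)
    then have "i \<noteq> j" using Qj by (auto simp: Q_def j_def)
    then have ij: "i < j" using Qj by (simp add: Q_def j_def)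
    have inD: "I ! i \<in> D j"
    proof (cases "j = Suc i")
      case True
      then show ?thesis using in_i by simp
    next
      case False
      then have "i \<le> j - 1" "j - 1 < j" using ij by auto
      then have "\<not> Q i (j - 1)" using not_less_Least[of "j - 1" "Q i"] unfolding j_def phi_def by blast
      moreover have "i \<le> j - 1 \<and> j - 1 < n \<and> (\<forall>l. i < l \<and> l \<le> j - 1 \<longrightarrow> I ! l \<noteq> I ! i)"
        using Qj \<open>i \<le> j - 1\<close> unfolding Q_def j_def by auto
      ultimately show ?thesis using ij unfolding Q_def by (simp add: Suc_pred')
    qed
    have jn: "j < n" and neq: "I ! j \<noteq> I ! i" and notin: "I ! i \<notin> D (Suc j)"
      using Qj ij by (auto simp: Q_def j_def)
    have f1: "I ! j \<notin> D j"
    proof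
      assume "I ! j \<in> D j"
      then have "D (Suc j) = D j" using hit_step jn by simp
      then show False using inD notin by simp
    qed
    have f2: "\<not> card (D j) < k"
    proof
      assume "card (D j) < k"
      then have "D (Suc j) = insert (I ! j) (D j)" using nonfull_step jn f1 by simp
      then show False using inD notin by simp
    qed
    have "D (Suc j) = insert (I ! j) (D j - {ev j})" using full_step jn f1 f2 by simp
    then have "ev j = I ! i" using inD notin neq by auto
    then show ?thesis using f1 f2 jn Qj by (simp add: Ev_def j_def)
  qed
  have "inj_on phi E"
  proof (rule inj_onI)
    fix a b assume ab: "a \<in> E" "b \<in> E" "phi a = phi b"
    have Ia: "I ! a = I ! b" using main[OF ab(1)] main[OF ab(2)] ab(3) by simp
    show "a = b"
    proof (rule ccontr)
      assume "a \<noteq> b"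
      then consider "a < b" | "b < a" by linarith
      then show False
      proof cases
        case 1
        have "Q a (phi a)" using main[OF ab(1)] by blast
        moreover have "Q b (phi b)" using main[OF ab(2)] by blast
        ultimately have "Q a (phi a)" "Q b (phi a)" using ab(3) by auto
        then show False using 1 Ia ab(3) unfolding Q_def by auto
      next
        case 2
        have "Q a (phi a)" using main[OF ab(1)] by blast
        moreover have "Q b (phi b)" using main[OF ab(2)] by blast
        ultimately have "Q a (phi a)" "Q b (phi a)" using ab(3) by auto
        then show False using 2 Ia ab(3) unfolding Q_def by auto
      qed
    qed
  qed
  moreover have "phi ` E \<subseteq> Ev" using main by auto
  moreover have "finite Ev" by (auto simp: Ev_def)
  ultimately show ?thesis by (metis card_image card_mono)
qed

lemma E_ge: "card Ev \<le> card E"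
proof -
  define psi where "psi j = (GREATEST i. i < j \<and> I ! i = ev j)" for j
  have main: "psi j < j \<and> I ! psi j = ev j \<and> (\<forall>i. i < j \<and> I ! i = ev j \<longrightarrow> i \<le> psi j) \<and> psi j \<in> E"
    if "j \<in> Ev" for j
  proof -
    have jj: "j < n" "I ! j \<notin> D j" "\<not> card (D j) < k" using that by (auto simp: Ev_def)
    note fs = full_step[OF jj]
    have "ev j \<in> {I ! m | m. m < j}" using fs D_sub[of j] jj by auto
    then obtain m where m: "m < j" "I ! m = ev j" by auto
    have b: "\<forall>y. y < j \<and> I ! y = ev j \<longrightarrow> y \<le> j" by auto
    have g: "psi j < j \<and> I ! psi j = ev j" unfolding psi_def
      using GreatestI_nat[of "\<lambda>i. i < j \<and> I ! i = ev j" m j] m b by blast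
    have g2: "\<forall>i. i < j \<and> I ! i = ev j \<longrightarrow> i \<le> psi j" unfolding psi_def
      using Greatest_le_nat[of "\<lambda>i. i < j \<and> I ! i = ev j" _ j] b by blast
    have "pstar_disc k tb I (psi j)"
      unfolding pstar_D
    proof (intro exI[of _ j] conjI allI impI)
      show "psi j \<le> j" "j < n" using g jj by auto
      fix l assume l: "psi j < l \<and> l \<le> j"
      show "I ! l \<noteq> I ! psi j"
      proof (cases "l = j")
        case True
        then show ?thesis using g fs jj by auto
      next
        case False
        then show ?thesis using g2 l g by force
      qed
    next
      show "I ! psi j \<notin> D (Suc j)" using g fs jj by auto
    qed
    then show ?thesis using g g2 jj by (simp add: E_def)
  qed
  have "inj_on psi Ev"
  proof (rule inj_onI)
    fix a b assume ab: "a \<in> Ev" "b \<in> Ev" "psi a = psi b"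
    have e: "ev a = ev b" using main[OF ab(1)] main[OF ab(2)] ab(3) by simp
    have *: False if xy: "x \<in> Ev" "y \<in> Ev" "psi x = psi y" "x < y" "ev x = ev y" for x y
    proof -
      have xx: "x < n" "I ! x \<notin> D x" "\<not> card (D x) < k" using xy by (auto simp: Ev_def)
      have yy: "y < n" "I ! y \<notin> D y" "\<not> card (D y) < k" using xy by (auto simp: Ev_def)
      note fx = full_step[OF xx] and fy = full_step[OF yy]
      have "ev x \<notin> D (Suc x)" using fx xx by auto
      moreover have "ev y \<in> D y" using fy by blast
      then have "ev x \<in> D y" using xy(5) by simp
      ultimately obtain m where m: "Suc x \<le> m" "m < y" "fst (xs ! m) = ev x"
        using csg_enter[OF k1, of "ev x" LB xs "Suc x" y] xy(4) by (auto simp: D_def)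
      then have "I ! m = ev y" using yy xy by simp
      then have "m \<le> psi y" using main[OF xy(2)] m by auto
      moreover have "psi x < x" using main[OF xy(1)] by simp
      ultimately show False using m xy by simp
    qed
    show "a = b"
      using *[of a b] *[of b a] ab e by (metis linorder_neqE_nat)
  qed
  moreover have "psi ` Ev \<subseteq> E" using main by auto
  moreover have "finite E" by (auto simp: E_def)
  ultimately show ?thesis by (metis card_image card_mono)
qed

end



definition phf :: "nat \<Rightarrow> nat \<times> nat set \<Rightarrow> nat \<Rightarrow> nat \<times> nat set" where
  "phf k s r = (if card (insert r (snd s)) \<le> k then (fst s, insert r (snd s)) else (Suc (fst s), {r}))"

lemma phase_ids_nth:
  "m < length rs \<Longrightarrow> phase_ids k j S rs ! m = fst (foldl (phf k) (j, S) (take (Suc m) rs))"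
proof (induction rs arbitrary: j S m)
  case Nil
  then show ?case by simp
next
  case (Cons r rs)
  show ?case
  proof (cases m)
    case 0
    then show ?thesis by (simp add: phf_def)
  next
    case (Suc m')
    then show ?thesis using Cons by (simp add: phf_def)
  qed
qed

fun pstate :: "nat \<Rightarrow> nat list \<Rightarrow> nat \<Rightarrow> nat \<times> nat set" where
  "pstate k I 0 = phf k (0, {}) (I ! 0)"
| "pstate k I (Suc i) = phf k (pstate k I i) (I ! Suc i)"

lemma foldl_pstate: "i < length I \<Longrightarrow> foldl (phf k) (0, {}) (take (Suc i) I) = pstate k I i"
proof (induction i)
  case 0
  then show ?case by (cases I) auto
next
  case (Suc i)
  then show ?case by (simp add: take_Suc_conv_app_nth)
qed

lemma phase_pstate: "i < length I \<Longrightarrow> phase k I i = fst (pstate k I i)"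
  unfolding phase_def using phase_ids_nth foldl_pstate by simp

locale phc =
  fixes k :: nat and I :: "nat list"
  assumes k1: "k \<ge> 1"
begin

abbreviation "n \<equiv> length I"
definition "ph i = fst (pstate k I i)"
definition "S i = snd (pstate k I i)"

lemma ph0: "ph 0 = 0" and S0: "S 0 = {I ! 0}"
  using k1 by (auto simp: ph_def S_def phf_def)

lemma pstep: "(ph (Suc i) = ph i \<and> S (Suc i) = insert (I ! Suc i) (S i) \<and> card (insert (I ! Suc i) (S i)) \<le> k)
  \<or> (ph (Suc i) = Suc (ph i) \<and> S (Suc i) = {I ! Suc i} \<and> \<not> card (insert (I ! Suc i) (S i)) \<le> k)"
  by (auto simp: ph_def S_def phf_def)

lemma S_props: "finite (S i) \<and> card (S i) \<le> k"
proof (induction i)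
  case 0
  then show ?case using S0 k1 by simp
next
  case (Suc i)
  then show ?case using pstep[of i] k1 by auto
qed

lemma ph_suc: "ph i \<le> ph (Suc i) \<and> ph (Suc i) \<le> Suc (ph i)"
  using pstep[of i] by auto

lemma ph_mono: "a \<le> b \<Longrightarrow> ph a \<le> ph b"
proof (induction b)
  case 0
  then show ?case by simp
next
  case (Suc b)
  then show ?case using ph_suc[of b] by (cases "a = Suc b") auto
qed

lemma S_char: "S i = {I ! m | m. m \<le> i \<and> ph m = ph i}"
proof (induction i)
  case 0
  then show ?case using S0 by auto
next
  case (Suc i)
  from pstep[of i] show ?case
  proof
    assume a: "ph (Suc i) = ph i \<and> S (Suc i) = insert (I ! Suc i) (S i) \<and> card (insert (I ! Suc i) (S i)) \<le> k"
    show ?thesis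
    proof (rule set_eqI)
      fix x
      have "(\<exists>m. x = I ! m \<and> m \<le> Suc i \<and> ph m = ph (Suc i)) \<longleftrightarrow>
            x = I ! Suc i \<or> (\<exists>m. x = I ! m \<and> m \<le> i \<and> ph m = ph i)"
        using a le_Suc_eq by metis
      then show "x \<in> S (Suc i) \<longleftrightarrow> x \<in> {I ! m | m. m \<le> Suc i \<and> ph m = ph (Suc i)}"
        using a Suc.IH by blast
    qed
  next
    assume a: "ph (Suc i) = Suc (ph i) \<and> S (Suc i) = {I ! Suc i} \<and> \<not> card (insert (I ! Suc i) (S i)) \<le> k"
    have m: "m = Suc i" if "m \<le> Suc i" "ph m = ph (Suc i)" for m
    proof (rule ccontr)
      assume "m \<noteq> Suc i"
      then have "m \<le> i" using that by simp
      then have "ph m \<le> ph i" by (rule ph_mono)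
      then show False using that a by simp
    qed
    show ?thesis
    proof (rule set_eqI)
      fix x
      show "x \<in> S (Suc i) \<longleftrightarrow> x \<in> {I ! m | m. m \<le> Suc i \<and> ph m = ph (Suc i)}"
        using a m by blast
    qed
  qed
qed

lemma ph_count: "k * ph i + card (S i) \<le> Suc i"
proof (induction i)
  case 0
  then show ?case using ph0 S0 by simp
next
  case (Suc i)
  from pstep[of i] show ?case
  proof
    assume a: "ph (Suc i) = ph i \<and> S (Suc i) = insert (I ! Suc i) (S i) \<and> card (insert (I ! Suc i) (S i)) \<le> k"
    have "card (S (Suc i)) \<le> Suc (card (S i))" using a S_props[of i] by (simp add: card_insert_le_m1 card_insert_if)
    then show ?thesis using Suc a by simp
  next
    assume a: "ph (Suc i) = Suc (ph i) \<and> S (Suc i) = {I ! Suc i} \<and> \<not> card (insert (I ! Suc i) (S i)) \<le> k"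
    have "card (insert (I ! Suc i) (S i)) \<le> Suc (card (S i))" using S_props[of i] by (simp add: card_insert_if)
    then have "k \<le> card (S i)" using a by simp
    then show ?thesis using Suc a by simp
  qed
qed

lemma attained: "j \<le> ph i \<Longrightarrow> \<exists>m\<le>i. ph m = j"
proof (induction i)
  case 0
  then show ?case using ph0 by simp
next
  case (Suc i)
  show ?case
  proof (cases "j = ph (Suc i)")
    case True
    then show ?thesis by blast
  next
    case False
    then have "j \<le> ph i" using Suc.prems ph_suc[of i] by linarith
    then show ?thesis using Suc.IH le_Suc_eq by blast
  qed
qed

definition "Pg j = {I ! m | m. m < n \<and> ph m = j}"

lemma Pg_S: "e < n \<Longrightarrow> ph e = j \<Longrightarrow> (\<forall>m. m < n \<and> ph m = j \<longrightarrow> m \<le> e) \<Longrightarrow> Pg j = S e"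
  unfolding Pg_def S_char by force

lemma Pg_card: "finite (Pg j) \<and> card (Pg j) \<le> k"
proof (cases "\<exists>m. m < n \<and> ph m = j")
  case True
  define e where "e = (GREATEST m. m < n \<and> ph m = j)"
  have b: "\<forall>y. y < n \<and> ph y = j \<longrightarrow> y \<le> n" by auto
  have "e < n \<and> ph e = j" using True GreatestI_nat[of "\<lambda>m. m < n \<and> ph m = j" _ n] b unfolding e_def by blast
  moreover have "\<forall>m. m < n \<and> ph m = j \<longrightarrow> m \<le> e" using Greatest_le_nat[of "\<lambda>m. m < n \<and> ph m = j" _ n] b unfolding e_def by blast
  ultimately have "Pg j = S e" using Pg_S by blast
  then show ?thesis using S_props by simp
next
  case False
  then have "Pg j = {}" by (auto simp: Pg_def)
  then show ?thesis by simp
qed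

lemma boundary:
  assumes "n \<ge> 1" "j < ph (n - 1)"
  shows "\<exists>e. Suc e < n \<and> ph e = j \<and> ph (Suc e) = Suc j \<and> Pg j = S e \<and> card (S e) = k \<and> I ! Suc e \<notin> S e
        \<and> I ! Suc e \<in> Pg (Suc j)"
proof -
  obtain m0 where m0: "m0 \<le> n - 1" "ph m0 = j" using attained assms by (meson less_imp_le)
  then have m0n: "m0 < n \<and> ph m0 = j" using assms by simp
  define e where "e = (GREATEST m. m < n \<and> ph m = j)"
  have b: "\<forall>y. y < n \<and> ph y = j \<longrightarrow> y \<le> n" by auto
  have e1: "e < n \<and> ph e = j" using m0n GreatestI_nat[of "\<lambda>m. m < n \<and> ph m = j" _ n] b unfolding e_def by blast
  have e2: "\<forall>m. m < n \<and> ph m = j \<longrightarrow> m \<le> e" using Greatest_le_nat[of "\<lambda>m. m < n \<and> ph m = j" _ n] b unfolding e_def by blast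
  have "e \<noteq> n - 1" using e1 assms by auto
  then have sn: "Suc e < n" using e1 by linarith
  then have "ph (Suc e) \<noteq> j" using e2 by fastforce
  then have ps: "ph (Suc e) = Suc j" using ph_suc[of e] e1 by simp
  then have c: "\<not> card (insert (I ! Suc e) (S e)) \<le> k" using pstep[of e] e1 by auto
  have "card (insert (I ! Suc e) (S e)) \<le> Suc (card (S e))" using S_props[of e] by (simp add: card_insert_if)
  then have "card (S e) = k" "I ! Suc e \<notin> S e" using c S_props[of e] by (auto simp: card_insert_if)
  moreover have "Pg j = S e" using Pg_S e1 e2 by blast
  moreover have "I ! Suc e \<in> Pg (Suc j)" using sn ps by (auto simp: Pg_def)
  ultimately show ?thesis using sn e1 ps by blast
qed

lemma counted_iff: "n \<ge> 1 \<Longrightarrow> counted k I i = (i < n \<and> ph i \<noteq> ph (n - 1) \<and> (\<forall>l. i < l \<and> l < n \<and> ph l = ph i \<longrightarrow> I ! l \<noteq> I ! i))"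
  unfolding counted_def using phase_pstate[of _ I k] by (auto simp: ph_def)

lemma pstar_iff: "i < n \<Longrightarrow> pstar_phase k I i = (I ! i \<notin> Pg (Suc (ph i)))"
proof -
  assume i: "i < n"
  have "(\<exists>l<n. phase k I l = phase k I i + 1 \<and> I ! l = I ! i) = (\<exists>l<n. ph l = Suc (ph i) \<and> I ! l = I ! i)"
    using phase_pstate[of _ I k] i by (auto simp: ph_def)
  then show ?thesis by (auto simp: pstar_phase_def Pg_def)
qed

lemma counted_lt: "n \<ge> 1 \<Longrightarrow> counted k I i \<Longrightarrow> ph i < ph (n - 1)"
  using counted_iff ph_mono[of i "n - 1"] by fastforce

lemma counted_uniq: "n \<ge> 1 \<Longrightarrow> counted k I a \<Longrightarrow> counted k I b \<Longrightarrow> ph a = ph b \<Longrightarrow> I ! a = I ! b \<Longrightarrow> a = b"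
  using counted_iff by (metis linorder_neqE_nat)

lemma phases_bound: "n \<ge> 1 \<Longrightarrow> k * ph (n - 1) \<le> n"
  using ph_count[of "n - 1"] by simp

lemma Y_bound:
  assumes n1: "n \<ge> 1"
  shows "card {i. counted k I i \<and> \<not> pstar_phase k I i} \<le> (k - 1) * ph (n - 1)"
proof -
  define Y where "Y j = {i. counted k I i \<and> \<not> pstar_phase k I i \<and> ph i = j}" for j
  have sub: "{i. counted k I i \<and> \<not> pstar_phase k I i} \<subseteq> (\<Union>j\<in>{..<ph (n - 1)}. Y j)"
    using counted_lt[OF n1] by (auto simp: Y_def)
  have cY: "card (Y j) \<le> k - 1" if j: "j < ph (n - 1)" for j
  proof -
    obtain e where e: "Suc e < n" "ph e = j" "ph (Suc e) = Suc j" "Pg j = S e" "I ! Suc e \<notin> S e"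
      "I ! Suc e \<in> Pg (Suc j)"
      using boundary[OF n1 j] by blast
    have inj: "inj_on (\<lambda>i. I ! i) (Y j)"
      using counted_uniq[OF n1] by (auto simp: Y_def inj_on_def)
    have "(\<lambda>i. I ! i) ` Y j \<subseteq> Pg (Suc j) - {I ! Suc e}"
    proof
      fix x assume "x \<in> (\<lambda>i. I ! i) ` Y j"
      then obtain i where i: "i \<in> Y j" "x = I ! i" by auto
      then have ic: "i < n" "ph i = j" using counted_iff[OF n1] by (auto simp: Y_def)
      then have "x \<in> Pg j" using i by (auto simp: Pg_def)
      then have "x \<noteq> I ! Suc e" using e by auto
      moreover have "x \<in> Pg (Suc j)" using i ic pstar_iff by (auto simp: Y_def)
      ultimately show "x \<in> Pg (Suc j) - {I ! Suc e}" by simp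
    qed
    then have "card (Y j) \<le> card (Pg (Suc j) - {I ! Suc e})"
      using inj Pg_card by (metis card_image card_mono finite_Diff)
    also have "\<dots> = card (Pg (Suc j)) - 1" using Pg_card[of "Suc j"] e(6) by (simp add: card_Diff_singleton)
    also have "\<dots> \<le> k - 1" using Pg_card[of "Suc j"] by (simp add: diff_le_mono)
    finally show ?thesis .
  qed
  have "card {i. counted k I i \<and> \<not> pstar_phase k I i} \<le> card (\<Union>j\<in>{..<ph (n - 1)}. Y j)"
  proof (rule card_mono)
    show "finite (\<Union>j\<in>{..<ph (n - 1)}. Y j)"
      using counted_iff[OF n1] by (auto simp: Y_def intro: finite_subset[of _ "{..<n}"])
  qed (rule sub)
  also have "\<dots> \<le> (\<Sum>j\<in>{..<ph (n - 1)}. card (Y j))" by (rule card_UN_le) simp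
  also have "\<dots> \<le> (\<Sum>j\<in>{..<ph (n - 1)}. k - 1)" by (rule sum_mono) (use cY in auto)
  finally show ?thesis by (simp add: mult.commute)
qed

lemma X_bound:
  assumes n1: "n \<ge> 1" and rng: "\<And>j. j < n \<Longrightarrow> I ! j \<le> k"
  shows "card {i. counted k I i \<and> pstar_phase k I i} \<le> ph (n - 1) + (k + 1)"
proof -
  define X where "X = {i. counted k I i \<and> pstar_phase k I i}"
  define X1 where "X1 = {i\<in>X. Suc (ph i) < ph (n - 1)}"
  define X2 where "X2 = {i\<in>X. Suc (ph i) = ph (n - 1)}"
  have finX: "finite X" using counted_iff[OF n1] by (auto simp: X_def intro: finite_subset[of _ "{..<n}"])
  have XU: "X = X1 \<union> X2"
  proof
    show "X \<subseteq> X1 \<union> X2"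
    proof
      fix x assume x: "x \<in> X"
      then have "ph x < ph (n - 1)" using counted_lt[OF n1] by (simp add: X_def)
      then have "Suc (ph x) < ph (n - 1) \<or> Suc (ph x) = ph (n - 1)" by linarith
      then show "x \<in> X1 \<union> X2" using x by (auto simp: X1_def X2_def)
    qed
  qed (auto simp: X1_def X2_def)
  have c1: "card X1 \<le> ph (n - 1)"
  proof -
    have "inj_on ph X1"
    proof (rule inj_onI)
      fix a b assume ab: "a \<in> X1" "b \<in> X1" "ph a = ph b"
      define j where "j = ph a"
      have "Suc j < ph (n - 1)" using ab by (simp add: X1_def j_def)
      then obtain e where e: "Suc e < n" "Pg (Suc j) = S e" "card (S e) = k"
        using boundary[OF n1, of "Suc j"] by blast
      have an: "a < n" "b < n" using ab counted_iff[OF n1] by (auto simp: X1_def X_def)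
      have "pstar_phase k I a" "pstar_phase k I b" using ab by (simp_all add: X1_def X_def)
      then have na: "I ! a \<notin> Pg (Suc j)" and nb: "I ! b \<notin> Pg (Suc j)"
        using pstar_iff[OF an(1)] pstar_iff[OF an(2)] ab(3) by (simp_all add: j_def)
      have ra: "I ! a \<in> {0..k}" and rb: "I ! b \<in> {0..k}" using rng an by auto
      have sb: "Pg (Suc j) \<subseteq> {0..k}" using rng by (auto simp: Pg_def)
      have c1: "card ({0..k} - Pg (Suc j)) = 1"
        using e sb card_Diff_subset[of "Pg (Suc j)" "{0..k}"] finite_subset[OF sb] by simp
      then obtain z where z: "{0..k} - Pg (Suc j) = {z}"
        by (metis card_1_singletonE)
      have "I ! a \<in> {0..k} - Pg (Suc j)" "I ! b \<in> {0..k} - Pg (Suc j)" using na nb ra rb by simp_all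
      then have "I ! a = I ! b" unfolding z by simp
      moreover have "counted k I a" "counted k I b" using ab by (simp_all add: X1_def X_def)
      ultimately show "a = b" using counted_uniq[OF n1, of a b] ab(3) by blast
    qed
    moreover have "ph ` X1 \<subseteq> {..<ph (n - 1)}" by (auto simp: X1_def)
    ultimately have "card X1 \<le> card {..<ph (n - 1)}" using card_image card_mono finite_lessThan by metis
    then show ?thesis by simp
  qed
  have c2: "card X2 \<le> k + 1"
  proof -
    have "inj_on (\<lambda>i. I ! i) X2"
    proof (rule inj_onI)
      fix a b assume ab: "a \<in> X2" "b \<in> X2" "I ! a = I ! b"
      then have "counted k I a" "counted k I b" "ph a = ph b" by (simp_all add: X2_def X_def)
      then show "a = b" using counted_uniq[OF n1, of a b] ab(3) by blast
    qed
    moreover have "(\<lambda>i. I ! i) ` X2 \<subseteq> {0..k}"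
    proof
      fix x assume "x \<in> (\<lambda>i. I ! i) ` X2"
      then obtain i where i: "i \<in> X2" "x = I ! i" by blast
      then have "counted k I i" by (simp add: X2_def X_def)
      then have "i < n" using counted_iff[OF n1] by blast
      then show "x \<in> {0..k}" using rng i by simp
    qed
    ultimately have "card X2 \<le> card {0..k}" using card_image card_mono finite_atLeastAtMost by metis
    then show ?thesis by simp
  qed
  have "card X \<le> card X1 + card X2" unfolding XU by (rule card_Un_le)
  then show ?thesis using c1 c2 unfolding X_def by simp
qed

end



lemma contra_lin:
  fixes \<theta> K :: real
  assumes "\<theta> < 1" "\<And>N::nat. N \<ge> 1 \<Longrightarrow> real N \<le> \<theta> * real N + K"
  shows False
proof -
  obtain N :: nat where N: "max 1 (K / (1 - \<theta>)) < real N" using reals_Archimedean2 by blast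
  then have N1: "N \<ge> 1" by simp
  have "K / (1 - \<theta>) < real N" using N by simp
  then have "K < real N * (1 - \<theta>)" using assms(1) by (simp add: divide_less_eq)
  then show False using assms(2)[OF N1] by (simp add: algebra_simps)
qed

lemma valid_Min: "valid_tiebreak (\<lambda>i S. Min S)"
  by (simp add: valid_tiebreak_def)

context lfdc
begin

lemma Ev_real: "real (card Ev) \<le> real n / real k + 1"
proof -
  have "k * card Ev \<le> n + k - 1" by (rule Ev_card)
  then have "real (k * card Ev) \<le> real (n + k - 1)" by (simp only: of_nat_le_iff)
  then have "real k * real (card Ev) \<le> real n + real k - 1" using k1 by (simp add: of_nat_diff)
  then have "real (card Ev) \<le> (real n + real k) / real k" using k1
    by (simp add: field_simps)
  also have "\<dots> = real n / real k + 1" using k1 by (simp add: field_simps)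
  finally show ?thesis .
qed

lemma OPT_real: "real (OPT k I) \<le> real n / real k + real k + 1"
proof -
  have "OPT k I \<le> k + card Ev" using OPT_le[of k I LB] L_le by simp
  then have "real (OPT k I) \<le> real k + real (card Ev)" by simp
  then show ?thesis using Ev_real by simp
qed

lemma E_eq: "card E = card Ev" using E_le E_ge by simp

lemma OPT_E: "OPT k I \<le> card E + k"
  using OPT_le[of k I LB] L_le E_eq by simp

end

lemma adv_facts:
  assumes "k \<ge> 1"
  shows "length (advl k A c N) = N \<and> (\<forall>j<N. advl k A c N ! j \<le> k) \<and> ALG k A (advl k A c N) (\<lambda>_. c) = N"
  using advl_in[OF assms] ALG_advl[OF assms] by auto

lemma fresh_disc:
  assumes "k \<ge> 1" "\<alpha> < 1"
  shows "\<not> competitive k A (eta_disc k tb) \<alpha> \<beta> \<gamma>"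
proof
  assume "competitive k A (eta_disc k tb) \<alpha> \<beta> \<gamma>"
  then obtain b where b: "\<And>I p. real (ALG k A I p) \<le> \<alpha> * real (OPT k I) + \<beta> * real (eta_disc k tb False I p)
     + \<gamma> * real (eta_disc k tb True I p) + b" unfolding competitive_def by blast
  have "real N \<le> \<alpha> * real N + b" if "N \<ge> 1" for N :: nat
  proof -
    have e: "eta_disc k tb h [0..<N] (pstar_disc k tb [0..<N]) = 0" for h
      unfolding eta_disc_def by auto
    show ?thesis using b[of "[0..<N]" "pstar_disc k tb [0..<N]"] e ALG_fresh[OF assms(1)] OPT_fresh[OF assms(1)]
      by simp
  qed
  then show False using contra_lin[OF assms(2)] by blast
qed

lemma fresh_phase:
  assumes "k \<ge> 1" "\<alpha> < 1"
  shows "\<not> competitive k A (eta_phase k) \<alpha> \<beta> \<gamma>"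
proof
  assume "competitive k A (eta_phase k) \<alpha> \<beta> \<gamma>"
  then obtain b where b: "\<And>I p. real (ALG k A I p) \<le> \<alpha> * real (OPT k I) + \<beta> * real (eta_phase k False I p)
     + \<gamma> * real (eta_phase k True I p) + b" unfolding competitive_def by blast
  have "real N \<le> \<alpha> * real N + b" if "N \<ge> 1" for N :: nat
  proof -
    have e: "eta_phase k h [0..<N] (pstar_phase k [0..<N]) = 0" for h
    proof -
      have z: "{i. counted k [0..<N] i \<and> pstar_phase k [0..<N] i = h \<and> pstar_phase k [0..<N] i = (\<not> h)} = {}" by auto
      show ?thesis unfolding eta_phase_def z by (rule card.empty)
    qed
    show ?thesis using b[of "[0..<N]" "pstar_phase k [0..<N]"] e ALG_fresh[OF assms(1)] OPT_fresh[OF assms(1)]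
      by simp
  qed
  then show False using contra_lin[OF assms(2)] by blast
qed



lemma eta_disc_FF: "eta_disc k tb False I (\<lambda>_. False) = card {i. i < length I \<and> pstar_disc k tb I i}"
  unfolding eta_disc_def by simp

lemma eta_disc_TF: "eta_disc k tb True I (\<lambda>_. False) = 0"
  unfolding eta_disc_def by simp

lemma eta_disc_FT: "eta_disc k tb False I (\<lambda>_. True) = 0"
  unfolding eta_disc_def by simp

lemma eta_disc_TT: "eta_disc k tb True I (\<lambda>_. True) = length I - card {i. i < length I \<and> pstar_disc k tb I i}"
proof -
  have "{i. i < length I \<and> (\<lambda>_. True) i = True \<and> pstar_disc k tb I i = (\<not> True)}
      = {..<length I} - {i. i < length I \<and> pstar_disc k tb I i}" by auto
  moreover have "card ({..<length I} - {i. i < length I \<and> pstar_disc k tb I i}) = length I - card {i. i < length I \<and> pstar_disc k tb I i}"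
    by (subst card_Diff_subset) auto
  ultimately show ?thesis unfolding eta_disc_def by simp
qed

lemma eta_phase_FF: "eta_phase k False I (\<lambda>_. False) = card {i. counted k I i \<and> pstar_phase k I i}"
  unfolding eta_phase_def by simp

lemma eta_phase_TF: "eta_phase k True I (\<lambda>_. False) = 0"
  unfolding eta_phase_def by simp

lemma eta_phase_FT: "eta_phase k False I (\<lambda>_. True) = 0"
  unfolding eta_phase_def by simp

lemma eta_phase_TT: "eta_phase k True I (\<lambda>_. True) = card {i. counted k I i \<and> \<not> pstar_phase k I i}"
  unfolding eta_phase_def by simp

lemma disc_beta:
  assumes k1: "k \<ge> 1" and vtb: "valid_tiebreak tb" and ab: "\<alpha> \<ge> 0" "\<beta> \<ge> 0" "\<alpha> + \<beta> < real k"
  shows "\<not> competitive k A (eta_disc k tb) \<alpha> \<beta> \<gamma>"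
proof
  assume "competitive k A (eta_disc k tb) \<alpha> \<beta> \<gamma>"
  then obtain b where b: "\<And>I p. real (ALG k A I p) \<le> \<alpha> * real (OPT k I) + \<beta> * real (eta_disc k tb False I p)
     + \<gamma> * real (eta_disc k tb True I p) + b" unfolding competitive_def by blast
  have "real N \<le> ((\<alpha> + \<beta>) / real k) * real N + (\<alpha> * (real k + 1) + \<beta> + b)" if "N \<ge> 1" for N :: nat
  proof -
    define I where "I = advl k A False N"
    have f: "length I = N" "\<forall>j<N. I ! j \<le> k" "ALG k A I (\<lambda>_. False) = N"
      using adv_facts[OF k1, of A False N] unfolding I_def by auto
    interpret L: lfdc k tb I using k1 vtb f by unfold_locales auto
    have e1: "eta_disc k tb False I (\<lambda>_. False) = card L.E" unfolding eta_disc_FF L.E_def ..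
    have o: "real (OPT k I) \<le> real N / real k + real k + 1" using L.OPT_real f by simp
    have e: "real (card L.E) \<le> real N / real k + 1" using L.Ev_real L.E_eq f by simp
    have "real N \<le> \<alpha> * real (OPT k I) + \<beta> * real (card L.E) + b"
      using b[of I "\<lambda>_. False"] f e1 eta_disc_TF by simp
    also have "\<dots> \<le> \<alpha> * (real N / real k + real k + 1) + \<beta> * (real N / real k + 1) + b"
      using o e ab by (intro add_mono mult_left_mono) auto
    also have "\<dots> = ((\<alpha> + \<beta>) / real k) * real N + (\<alpha> * (real k + 1) + \<beta> + b)"
      using k1 by (simp add: field_simps)
    finally show ?thesis .
  qed
  moreover have "(\<alpha> + \<beta>) / real k < 1" using ab k1 by simp
  ultimately show False using contra_lin by blast
qed

lemma disc_gamma: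
  assumes k1: "k \<ge> 1" and vtb: "valid_tiebreak tb" and ab: "\<alpha> \<ge> \<gamma>" "\<gamma> \<ge> 0" "\<alpha> + (real k - 1) * \<gamma> < real k"
  shows "\<not> competitive k A (eta_disc k tb) \<alpha> \<beta> \<gamma>"
proof
  assume "competitive k A (eta_disc k tb) \<alpha> \<beta> \<gamma>"
  then obtain b where b: "\<And>I p. real (ALG k A I p) \<le> \<alpha> * real (OPT k I) + \<beta> * real (eta_disc k tb False I p)
     + \<gamma> * real (eta_disc k tb True I p) + b" unfolding competitive_def by blast
  have "real N \<le> ((\<alpha> + (real k - 1) * \<gamma>) / real k) * real N + ((\<alpha> - \<gamma>) * (real k + 1) + \<gamma> * real k + b)"
    if "N \<ge> 1" for N :: nat
  proof -
    define I where "I = advl k A True N"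
    have f: "length I = N" "\<forall>j<N. I ! j \<le> k" "ALG k A I (\<lambda>_. True) = N"
      using adv_facts[OF k1, of A True N] unfolding I_def by auto
    interpret L: lfdc k tb I using k1 vtb f by unfold_locales auto
    have e1: "eta_disc k tb True I (\<lambda>_. True) = N - card L.E" unfolding eta_disc_TT L.E_def f(1) ..
    have EN: "card L.E \<le> N" unfolding L.E_def using f(1) card_mono[of "{..<N}"] by (metis (no_types, lifting) card_lessThan finite_lessThan mem_Collect_eq subsetI lessThan_iff)
    have o: "real (OPT k I) \<le> real N / real k + real k + 1" using L.OPT_real f by simp
    have oe: "real (OPT k I) \<le> real (card L.E) + real k" using L.OPT_E by simp
    have "real N \<le> \<alpha> * real (OPT k I) + \<gamma> * (real N - real (card L.E)) + b"
      using b[of I "\<lambda>_. True"] f e1 eta_disc_FT EN by (simp add: of_nat_diff)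
    also have "\<dots> \<le> \<alpha> * real (OPT k I) + \<gamma> * (real N - real (OPT k I) + real k) + b"
      using oe ab by (intro add_mono mult_left_mono) auto
    also have "\<dots> = \<gamma> * real N + (\<alpha> - \<gamma>) * real (OPT k I) + \<gamma> * real k + b"
      by (simp add: algebra_simps)
    also have "\<dots> \<le> \<gamma> * real N + (\<alpha> - \<gamma>) * (real N / real k + real k + 1) + \<gamma> * real k + b"
      using o ab by (intro add_mono mult_left_mono) auto
    also have "\<dots> = ((\<alpha> + (real k - 1) * \<gamma>) / real k) * real N + ((\<alpha> - \<gamma>) * (real k + 1) + \<gamma> * real k + b)"
      using k1 by (simp add: field_simps)
    finally show ?thesis .
  qed
  moreover have "(\<alpha> + (real k - 1) * \<gamma>) / real k < 1" using ab k1 by simp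
  ultimately show False using contra_lin by blast
qed

lemma phase_beta:
  assumes k1: "k \<ge> 1" and ab: "\<alpha> \<ge> 0" "\<beta> \<ge> 0" "\<alpha> + \<beta> < real k"
  shows "\<not> competitive k A (eta_phase k) \<alpha> \<beta> \<gamma>"
proof
  assume "competitive k A (eta_phase k) \<alpha> \<beta> \<gamma>"
  then obtain b where b: "\<And>I p. real (ALG k A I p) \<le> \<alpha> * real (OPT k I) + \<beta> * real (eta_phase k False I p)
     + \<gamma> * real (eta_phase k True I p) + b" unfolding competitive_def by blast
  have "real N \<le> ((\<alpha> + \<beta>) / real k) * real N + ((\<alpha> + \<beta>) * (real k + 1) + b)" if N1: "N \<ge> 1" for N :: nat
  proof -
    define I where "I = advl k A False N"
    have f: "length I = N" "\<forall>j<N. I ! j \<le> k" "ALG k A I (\<lambda>_. False) = N"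
      using adv_facts[OF k1, of A False N] unfolding I_def by auto
    interpret L: lfdc k "\<lambda>i S. Min S" I using k1 valid_Min f by unfold_locales auto
    interpret P: phc k I using k1 by unfold_locales
    have n1: "length I \<ge> 1" using f N1 by simp
    have X: "card {i. counted k I i \<and> pstar_phase k I i} \<le> P.ph (N - 1) + (k + 1)"
      using P.X_bound[OF n1] f by simp
    have ph: "k * P.ph (N - 1) \<le> N" using P.phases_bound[OF n1] f by simp
    then have "real k * real (P.ph (N - 1)) \<le> real N" by (metis of_nat_le_iff of_nat_mult)
    then have phr: "real (P.ph (N - 1)) \<le> real N / real k" using k1 by (simp add: field_simps)
    have e: "real (eta_phase k False I (\<lambda>_. False)) \<le> real N / real k + real k + 1"
      using X phr unfolding eta_phase_FF by simp
    have o: "real (OPT k I) \<le> real N / real k + real k + 1" using L.OPT_real f by simp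
    have "real N \<le> \<alpha> * real (OPT k I) + \<beta> * real (eta_phase k False I (\<lambda>_. False)) + b"
      using b[of I "\<lambda>_. False"] f eta_phase_TF by simp
    also have "\<dots> \<le> \<alpha> * (real N / real k + real k + 1) + \<beta> * (real N / real k + real k + 1) + b"
      using o e ab by (intro add_mono mult_left_mono) auto
    also have "\<dots> = ((\<alpha> + \<beta>) / real k) * real N + ((\<alpha> + \<beta>) * (real k + 1) + b)"
      using k1 by (simp add: field_simps)
    finally show ?thesis .
  qed
  moreover have "(\<alpha> + \<beta>) / real k < 1" using ab k1 by simp
  ultimately show False using contra_lin by blast
qed

lemma phase_gamma:
  assumes k1: "k \<ge> 1" and ab: "\<alpha> \<ge> 0" "\<gamma> \<ge> 0" "\<alpha> + (real k - 1) * \<gamma> < real k"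
  shows "\<not> competitive k A (eta_phase k) \<alpha> \<beta> \<gamma>"
proof
  assume "competitive k A (eta_phase k) \<alpha> \<beta> \<gamma>"
  then obtain b where b: "\<And>I p. real (ALG k A I p) \<le> \<alpha> * real (OPT k I) + \<beta> * real (eta_phase k False I p)
     + \<gamma> * real (eta_phase k True I p) + b" unfolding competitive_def by blast
  have "real N \<le> ((\<alpha> + (real k - 1) * \<gamma>) / real k) * real N + (\<alpha> * (real k + 1) + b)" if N1: "N \<ge> 1" for N :: nat
  proof -
    define I where "I = advl k A True N"
    have f: "length I = N" "\<forall>j<N. I ! j \<le> k" "ALG k A I (\<lambda>_. True) = N"
      using adv_facts[OF k1, of A True N] unfolding I_def by auto
    interpret L: lfdc k "\<lambda>i S. Min S" I using k1 valid_Min f by unfold_locales auto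
    interpret P: phc k I using k1 by unfold_locales
    have n1: "length I \<ge> 1" using f N1 by simp
    have Y: "card {i. counted k I i \<and> \<not> pstar_phase k I i} \<le> (k - 1) * P.ph (N - 1)"
      using P.Y_bound[OF n1] f by simp
    have ph: "k * P.ph (N - 1) \<le> N" using P.phases_bound[OF n1] f by simp
    then have "real k * real (P.ph (N - 1)) \<le> real N" by (metis of_nat_le_iff of_nat_mult)
    then have phr: "real (P.ph (N - 1)) \<le> real N / real k" using k1 by (simp add: field_simps)
    have cv: "real ((k - 1) * P.ph (N - 1)) = (real k - 1) * real (P.ph (N - 1))"
      using k1 by (simp add: of_nat_diff)
    have "real (card {i. counted k I i \<and> \<not> pstar_phase k I i}) \<le> real ((k - 1) * P.ph (N - 1))"
      using Y by (simp only: of_nat_le_iff)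
    then have "real (card {i. counted k I i \<and> \<not> pstar_phase k I i}) \<le> (real k - 1) * real (P.ph (N - 1))"
      unfolding cv .
    also have "\<dots> \<le> (real k - 1) * (real N / real k)" using phr k1 by (intro mult_left_mono) auto
    finally have e: "real (eta_phase k True I (\<lambda>_. True)) \<le> (real k - 1) * (real N / real k)"
      unfolding eta_phase_TT .
    have o: "real (OPT k I) \<le> real N / real k + real k + 1" using L.OPT_real f by simp
    have "real N \<le> \<alpha> * real (OPT k I) + \<gamma> * real (eta_phase k True I (\<lambda>_. True)) + b"
      using b[of I "\<lambda>_. True"] f eta_phase_FT by simp
    also have "\<dots> \<le> \<alpha> * (real N / real k + real k + 1) + \<gamma> * ((real k - 1) * (real N / real k)) + b"
      using o e ab by (intro add_mono mult_left_mono) auto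
    also have "\<dots> = ((\<alpha> + (real k - 1) * \<gamma>) / real k) * real N + (\<alpha> * (real k + 1) + b)"
      using k1 by (simp add: field_simps)
    finally show ?thesis .
  qed
  moreover have "(\<alpha> + (real k - 1) * \<gamma>) / real k < 1" using ab k1 by simp
  ultimately show False using contra_lin by blast
qed

theorem theorem5:
  fixes k :: nat and A :: chooser and \<alpha> \<beta> \<gamma> :: real
  assumes "k \<ge> 1"
    and "\<alpha> \<ge> 0" and "\<beta> \<ge> 0" and "\<gamma> \<ge> 0"
    and "\<alpha> + \<beta> < real k \<or> \<alpha> + (real k - 1) * \<gamma> < real k"
  shows "(\<forall>tb. valid_tiebreak tb \<longrightarrow> \<not> competitive k A (eta_disc k tb) \<alpha> \<beta> \<gamma>)
         \<and> \<not> competitive k A (eta_phase k) \<alpha> \<beta> \<gamma>"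
proof (cases "\<alpha> < 1")
  case True
  then show ?thesis using fresh_disc fresh_phase assms(1) by blast
next
  case False
  from assms(5) show ?thesis
  proof
    assume h: "\<alpha> + \<beta> < real k"
    then show ?thesis using disc_beta phase_beta assms by blast
  next
    assume h: "\<alpha> + (real k - 1) * \<gamma> < real k"
    have "\<gamma> \<le> \<alpha>"
    proof (rule ccontr)
      assume "\<not> \<gamma> \<le> \<alpha>"
      then have g1: "\<gamma> > 1" using False by simp
      have "real k - 1 \<ge> 0" using assms(1) by simp
      then have "(real k - 1) * \<gamma> \<ge> (real k - 1) * 1" using g1 by (intro mult_left_mono) auto
      then show False using h False by simp
    qed
    then show ?thesis using disc_gamma phase_gamma assms h by blast
  qed
qed


end
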